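(* Let $D\in(0,1]$ and define $\mathcal F_{\bm B}:=\{r_2\in[\underline x,\bar x]:(\bm R\bm c^m)^\top G_{\bm B}(r_2)\le D\}$, $\mathcal F_{\bm A}:=\{(r_1,r_3,p)\in F:(\bm R\bm c^m)^\top G_{\bm A}(r_1,r_3,p)\le D\}$, $\mathcal F_{\bm B}^{=}:=\{r_2\in[\underline x,\bar x]:(\bm R\bm c^m)^\top G_{\bm B}(r_2)=D\}$ and $\mathcal F_{\bm A}^{=}:=\{(r_1,r_3,p)\in F:(\bm R\bm c^m)^\top G_{\bm A}(r_1,r_3,p)=D\}$. Then $$\max_{r_2\in\mathcal F_{\bm B}}(\bm R\bm v_1^m)^\top G_{\bm B}(r_2)=\max_{r_2\in\mathcal F_{\bm B}^{=}}(\bm R\bm v_1^m)^\top G_{\bm B}(r_2),\qquad \max_{(r_1,r_3,p)\in\mathcal F_{\bm A}}(\bm R\bm v_2^m)^\top G_{\bm A}(r_1,r_3,p)=\max_{(r_1,r_3,p)\in\mathcal F_{\bm A}^{=}}(\bm R\bm v_2^m)^\top G_{\bm A}(r_1,r_3,p).$$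
   Context: Let $N\ge3$ be an integer and $\underline x=x_1<x_2<\cdots<x_N=\bar x$ real numbers; $\bm e$ denotes the all-ones vector of the appropriate dimension. Define $\bm g:[\underline x,\bar x]\to\mathbb R^{N-1}$ by $\bm g(x_1)=\bm 0$ and, for $x\in(x_i,x_{i+1}]$ ($i\in\{1,\dots,N-1\}$), $\bm g(x)=(1,\dots,1,\frac{x-x_i}{x_{i+1}-x_i},0,\dots,0)$ with the first $i-1$ entries equal to $1$, the $i$-th entry $\frac{x-x_i}{x_{i+1}-x_i}$ and the last $N-1-i$ entries $0$. For $\bm v\in\mathbb R^{N-2}$ let $\bm R\bm v:=(v_1,\dots,v_{N-2},1-\bm e^\top\bm v)\in\mathbb R^{N-1}$. Define $G_{\bm A}(r_1,r_3,p):=(1-p)\bm g(r_1)+p\,\bm g(r_3)$, $G_{\bm B}(r_2):=\bm g(r_2)$, and $F:=\{(r_1,r_3,p)\in[\underline x,\bar x]\times[\underline x,\bar x]\times[0,1]: r_1\le r_3\}$. Fix $m\ge1$ and data $(r_1^k,r_3^k,p^k)\in F$, $r_2^k\in[\underline x,\bar x]$, $l_k\in\{-1,1\}$ for $k=1,\dots,m-1$. Let $\mathcal V^{m-1}:=\{\bm v\in\mathbb R^{N-2}: v_i\ge0\ (i=1,\dots,N-2),\ \bm e^\top\bm v\le1,\ l_k(\bm R\bm v)^\top(G_{\bm A}(r_1^k,r_3^k,p^k)-G_{\bm B}(r_2^k))\le0\ (k=1,\dots,m-1)\}$, assumed to have nonempty interior; write its defining inequalities as $\tilde{\bm a}_i^\top\bm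 v\le\tilde b_i$. Let $\bm c^m$ be its analytic center, i.e. the maximizer over the interior of $\mathcal V^{m-1}$ of $\sum_i\log(\tilde b_i-\tilde{\bm a}_i^\top\bm v)$; in particular $c^m_i>0$ for all $i$ and $1-\bm e^\top\bm c^m>0$. Let $\bm H:=\sum_i\tilde{\bm a}_i\tilde{\bm a}_i^\top/(\tilde b_i-\tilde{\bm a}_i^\top\bm c^m)^2$ (Sonnevend's inner ellipsoid is $\{\bm v:(\bm v-\bm c^m)^\top\bm H(\bm v-\bm c^m)\le1\}$), and let $\bm v_1^m,\bm v_2^m\in\mathcal V^{m-1}$ be the two points (in some fixed order) where the line through $\bm c^m$ in the direction of the longest axis of this ellipsoid meets the boundary of $\mathcal V^{m-1}$. *)

theory Defs
  imports Complex_Main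
begin

text \<open>Conventions. Vectors in R^n are functions nat => real, coordinates 1..n,
  all other coordinates 0 (predicate supp). Breakpoints x 1 < ... < x N.\<close>

definition supp :: "nat \<Rightarrow> (nat \<Rightarrow> real) \<Rightarrow> bool" where
  "supp n v \<longleftrightarrow> (\<forall>i. i \<notin> {1..n} \<longrightarrow> v i = 0)"

definition dotp :: "nat \<Rightarrow> (nat \<Rightarrow> real) \<Rightarrow> (nat \<Rightarrow> real) \<Rightarrow> real" where
  "dotp n a b = (\<Sum>j=1..n. a j * b j)"

text \<open>Interior of a set of vectors in R^n (sup-norm balls, same topology as Euclidean).\<close>
definition interior_n :: "nat \<Rightarrow> (nat \<Rightarrow> real) set \<Rightarrow> (nat \<Rightarrow> real) set" where
  "interior_n n S = {v \<in> S. supp n v \<and> (\<exists>\<epsilon>>0. \<forall>w. supp n w \<and> (\<forall>i\<in>{1..n}. \<bar>w i - v i\<bar> < \<epsilon>) \<longrightarrow> w \<in> S)}"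

definition gmap :: "(nat \<Rightarrow> real) \<Rightarrow> nat \<Rightarrow> real \<Rightarrow> (nat \<Rightarrow> real)" where
  "gmap x N t = (if t = x 1 then (\<lambda>j. 0) else
     (let i = (THE i. i \<in> {1..N-1} \<and> x i < t \<and> t \<le> x (Suc i)) in
       (\<lambda>j. if j \<in> {1..N-1} then
               (if j < i then 1 else if j = i then (t - x i) / (x (Suc i) - x i) else 0)
             else 0)))"

definition GA :: "(nat \<Rightarrow> real) \<Rightarrow> nat \<Rightarrow> real \<Rightarrow> real \<Rightarrow> real \<Rightarrow> (nat \<Rightarrow> real)" where
  "GA x N r1 r3 p = (\<lambda>j. (1 - p) * gmap x N r1 j + p * gmap x N r3 j)"

definition GB :: "(nat \<Rightarrow> real) \<Rightarrow> nat \<Rightarrow> real \<Rightarrow> (nat \<Rightarrow> real)" where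
  "GB x N r2 = gmap x N r2"

definition Rvec :: "nat \<Rightarrow> (nat \<Rightarrow> real) \<Rightarrow> (nat \<Rightarrow> real)" where
  "Rvec N v = (\<lambda>j. if j \<in> {1..N-2} then v j
                   else if j = N - 1 then 1 - (\<Sum>i=1..N-2. v i) else 0)"

definition Fset :: "(nat \<Rightarrow> real) \<Rightarrow> nat \<Rightarrow> (real \<times> real \<times> real) set" where
  "Fset x N = {(r1, r3, p). r1 \<in> {x 1..x N} \<and> r3 \<in> {x 1..x N} \<and> p \<in> {0..1} \<and> r1 \<le> r3}"

definition dvec :: "(nat \<Rightarrow> real) \<Rightarrow> nat \<Rightarrow> (nat \<Rightarrow> real) \<Rightarrow> (nat \<Rightarrow> real) \<Rightarrow> (nat \<Rightarrow> real)
    \<Rightarrow> (nat \<Rightarrow> real) \<Rightarrow> nat \<Rightarrow> (nat \<Rightarrow> real)" where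
  "dvec x N r1s r3s ps r2s k = (\<lambda>j. GA x N (r1s k) (r3s k) (ps k) j - GB x N (r2s k) j)"

definition Vset :: "(nat \<Rightarrow> real) \<Rightarrow> nat \<Rightarrow> nat \<Rightarrow> (nat \<Rightarrow> real) \<Rightarrow> (nat \<Rightarrow> real) \<Rightarrow> (nat \<Rightarrow> real)
    \<Rightarrow> (nat \<Rightarrow> real) \<Rightarrow> (nat \<Rightarrow> real) \<Rightarrow> (nat \<Rightarrow> real) set" where
  "Vset x N m r1s r3s ps r2s l = {v. supp (N-2) v \<and> (\<forall>i\<in>{1..N-2}. v i \<ge> 0) \<and>
      (\<Sum>i=1..N-2. v i) \<le> 1 \<and>
      (\<forall>k\<in>{1..m-1}. l k * dotp (N-1) (Rvec N v) (dvec x N r1s r3s ps r2s k) \<le> 0)}"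

text \<open>The defining inequalities of V written as a_i^T v <= b_i, i = 1..N+m-2:
  i <= N-2: -v_i <= 0; i = N-1: e^T v <= 1;
  i = N-1+k: l_k (R v)^T d_k <= 0, i.e. sum_j l_k (d_k j - d_k (N-1)) v_j <= - l_k d_k (N-1).\<close>
definition ncons :: "nat \<Rightarrow> nat \<Rightarrow> nat" where
  "ncons N m = N - 1 + (m - 1)"

definition acons :: "nat \<Rightarrow> (nat \<Rightarrow> nat \<Rightarrow> real) \<Rightarrow> (nat \<Rightarrow> real) \<Rightarrow> nat \<Rightarrow> (nat \<Rightarrow> real)" where
  "acons N d l i = (if i \<le> N - 2 then (\<lambda>j. if j = i then -1 else 0)
     else if i = N - 1 then (\<lambda>j. if j \<in> {1..N-2} then 1 else 0)
     else (\<lambda>j. if j \<in> {1..N-2} then l (i - (N-1)) * (d (i - (N-1)) j - d (i - (N-1)) (N-1)) else 0))"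

definition bcons :: "nat \<Rightarrow> (nat \<Rightarrow> nat \<Rightarrow> real) \<Rightarrow> (nat \<Rightarrow> real) \<Rightarrow> nat \<Rightarrow> real" where
  "bcons N d l i = (if i \<le> N - 2 then 0 else if i = N - 1 then 1
     else - l (i - (N-1)) * d (i - (N-1)) (N-1))"

definition slack :: "nat \<Rightarrow> (nat \<Rightarrow> nat \<Rightarrow> real) \<Rightarrow> (nat \<Rightarrow> real) \<Rightarrow> nat \<Rightarrow> (nat \<Rightarrow> real) \<Rightarrow> real" where
  "slack N d l i v = bcons N d l i - dotp (N-2) (acons N d l i) v"

definition barrier :: "nat \<Rightarrow> nat \<Rightarrow> (nat \<Rightarrow> nat \<Rightarrow> real) \<Rightarrow> (nat \<Rightarrow> real) \<Rightarrow> (nat \<Rightarrow> real) \<Rightarrow> real" where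
  "barrier N m d l v = (\<Sum>i=1..ncons N m. ln (slack N d l i v))"

definition analytic_center :: "nat \<Rightarrow> nat \<Rightarrow> (nat \<Rightarrow> nat \<Rightarrow> real) \<Rightarrow> (nat \<Rightarrow> real)
    \<Rightarrow> (nat \<Rightarrow> real) set \<Rightarrow> (nat \<Rightarrow> real) \<Rightarrow> bool" where
  "analytic_center N m d l V c \<longleftrightarrow> c \<in> interior_n (N-2) V \<and>
     (\<forall>i\<in>{1..ncons N m}. slack N d l i c > 0) \<and>
     (\<forall>v\<in>interior_n (N-2) V. barrier N m d l v \<le> barrier N m d l c)"

definition Hmat :: "nat \<Rightarrow> nat \<Rightarrow> (nat \<Rightarrow> nat \<Rightarrow> real) \<Rightarrow> (nat \<Rightarrow> real) \<Rightarrow> (nat \<Rightarrow> real)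
    \<Rightarrow> nat \<Rightarrow> nat \<Rightarrow> real" where
  "Hmat N m d l c j j' = (\<Sum>i=1..ncons N m. acons N d l i j * acons N d l i j' / (slack N d l i c)^2)"

definition quadH :: "nat \<Rightarrow> (nat \<Rightarrow> nat \<Rightarrow> real) \<Rightarrow> (nat \<Rightarrow> real) \<Rightarrow> real" where
  "quadH n H u = (\<Sum>j=1..n. \<Sum>j'=1..n. u j * H j j' * u j')"

text \<open>u spans the longest axis of the ellipsoid {v. (v-c)^T H (v-c) <= 1}:
  c + u is a point of the ellipsoid farthest from the center c.\<close>
definition longest_axis :: "nat \<Rightarrow> (nat \<Rightarrow> nat \<Rightarrow> real) \<Rightarrow> (nat \<Rightarrow> real) \<Rightarrow> bool" where
  "longest_axis n H u \<longleftrightarrow> supp n u \<and> u \<noteq> (\<lambda>j. 0) \<and> quadH n H u \<le> 1 \<and>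
     (\<forall>w. supp n w \<and> quadH n H w \<le> 1 \<longrightarrow> dotp n w w \<le> dotp n u u)"

definition is_max_val :: "'a set \<Rightarrow> ('a \<Rightarrow> real) \<Rightarrow> real \<Rightarrow> bool" where
  "is_max_val S f M \<longleftrightarrow> (\<exists>s\<in>S. f s = M) \<and> (\<forall>s\<in>S. f s \<le> M)"

end

theory Submission imports Defs "HOL-Analysis.Analysis" begin

definition gg :: "(nat \<Rightarrow> real) \<Rightarrow> nat \<Rightarrow> real \<Rightarrow> real" where
  "gg x j t = max 0 (min 1 ((t - x j) / (x (Suc j) - x j)))"

definition Hf :: "(nat \<Rightarrow> real) \<Rightarrow> nat \<Rightarrow> (nat \<Rightarrow> real) \<Rightarrow> real \<Rightarrow> real" where
  "Hf x N w t = (\<Sum>j=1..N-1. w j * gg x j t)"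

lemma gg_cont: "continuous_on S f \<Longrightarrow> continuous_on S (\<lambda>z. gg x j (f z))"
  unfolding gg_def divide_inverse by (intro continuous_intros)

lemma Hf_cont: "continuous_on S f \<Longrightarrow> continuous_on S (\<lambda>z. Hf x N w (f z))"
  unfolding Hf_def by (intro continuous_intros gg_cont)

lemma gg_mono: assumes "x j < x (Suc j)" "s \<le> t" shows "gg x j s \<le> gg x j t"
proof -
  have "(s - x j) / (x (Suc j) - x j) \<le> (t - x j) / (x (Suc j) - x j)"
    using assms by (intro divide_right_mono) auto
  then show ?thesis unfolding gg_def by linarith
qed

lemma Hf_mono: assumes "\<forall>i\<in>{1..N-1}. x i < x (Suc i)" "\<forall>j\<in>{1..N-1}. w j \<ge> 0" "s \<le> t"
  shows "Hf x N w s \<le> Hf x N w t"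
  unfolding Hf_def using assms by (intro sum_mono mult_left_mono gg_mono) auto

lemma x_mono_strict:
  fixes x :: "nat \<Rightarrow> real"
  assumes xinc: "\<forall>i\<in>{1..N-1}. x i < x (Suc i)" and "1 \<le> i" shows "i < j \<Longrightarrow> j \<le> N \<Longrightarrow> x i < x j"
proof (induction j)
  case 0 then show ?case by simp
next
  case (Suc j)
  show ?case
  proof (cases "i = j")
    case True then show ?thesis using xinc Suc.prems assms(2) by auto
  next
    case False
    then have "x i < x j" using Suc by auto
    moreover have "x j < x (Suc j)" using xinc Suc.prems assms(2) False by auto
    ultimately show ?thesis by simp
  qed
qed

lemma x_mono:
  fixes x :: "nat \<Rightarrow> real"
  assumes xinc: "\<forall>i\<in>{1..N-1}. x i < x (Suc i)" and "1 \<le> i" "i \<le> j" "j \<le> N" shows "x i \<le> x j"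
  using x_mono_strict[OF xinc assms(2), of j] assms by (cases "i = j") auto

lemma gmap_eq:
  assumes xinc: "\<forall>i\<in>{1..N-1}. x i < x (Suc i)" and N2: "N \<ge> 2" and t: "t \<in> {x 1..x N}"
  shows "gmap x N t = (\<lambda>j. if j \<in> {1..N-1} then gg x j t else 0)"
proof (cases "t = x 1")
  case True
  have "gg x j (x 1) = 0" if "j \<in> {1..N-1}" for j
  proof -
    have "x 1 \<le> x j" using x_mono[OF xinc, of 1 j] that by auto
    moreover have "x j < x (Suc j)" using xinc that by auto
    ultimately have "(x 1 - x j) / (x (Suc j) - x j) \<le> 0"
      by (intro divide_nonpos_pos) auto
    then show ?thesis unfolding gg_def by linarith
  qed
  then show ?thesis using True unfolding gmap_def by (auto simp del: atLeastAtMost_iff)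
next
  case False
  with t have t1: "x 1 < t" by auto
  define A where "A = {i\<in>{1..N-1}. x i < t}"
  define I where "I = Max A"
  have finA: "finite A" unfolding A_def by auto
  have "1 \<in> A" unfolding A_def using N2 t1 by auto
  then have neA: "A \<noteq> {}" by auto
  have IA: "I \<in> A" unfolding I_def using finA neA by simp
  have Imax: "i \<le> I" if "i \<in> A" for i unfolding I_def using finA that by simp
  have I1: "I \<in> {1..N-1}" and xI: "x I < t" using IA unfolding A_def by auto
  have xSI: "t \<le> x (Suc I)"
  proof (cases "Suc I \<le> N - 1")
    case True
    then have "\<not> x (Suc I) < t" using Imax[of "Suc I"] unfolding A_def by auto
    then show ?thesis by simp
  next
    case False
    then have "Suc I = N" using I1 N2 by auto
    then show ?thesis using t by auto
  qed
  have uniq: "i = I" if "i \<in> {1..N-1} \<and> x i < t \<and> t \<le> x (Suc i)" for i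
  proof (rule ccontr)
    assume "i \<noteq> I"
    then consider "i < I" | "I < i" by linarith
    then show False
    proof cases
      case 1
      then have "x (Suc i) \<le> x I" using x_mono[OF xinc, of "Suc i" I] I1 by auto
      then show False using that xI by auto
    next
      case 2
      then have "x (Suc I) \<le> x i" using x_mono[OF xinc, of "Suc I" i] that by auto
      then show False using that xSI by auto
    qed
  qed
  have theI: "(THE i. i \<in> {1..N-1} \<and> x i < t \<and> t \<le> x (Suc i)) = I"
    using uniq I1 xI xSI by (intro the_equality) auto
  have dI: "x I < x (Suc I)" using xinc I1 by auto
  have "(if j < I then 1 else if j = I then (t - x I) / (x (Suc I) - x I) else 0) = gg x j t"
    if j: "j \<in> {1..N-1}" for j
  proof -
    have dj: "x j < x (Suc j)" using xinc j by auto
    consider "j < I" | "j = I" | "I < j" by linarith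
    then show ?thesis
    proof cases
      case 1
      then have "x (Suc j) \<le> x I" using x_mono[OF xinc, of "Suc j" I] I1 by auto
      then have "1 \<le> (t - x j) / (x (Suc j) - x j)" using xI dj by (simp add: field_simps)
      then show ?thesis using 1 unfolding gg_def by simp
    next
      case 2
      have "(t - x j) / (x (Suc j) - x j) \<le> 1" using xSI dj 2 by (simp add: field_simps)
      moreover have "0 \<le> (t - x j) / (x (Suc j) - x j)" using xI dj 2 by simp
      ultimately show ?thesis using 2 unfolding gg_def by simp
    next
      case 3
      then have "x (Suc I) \<le> x j" using x_mono[OF xinc, of "Suc I" j] j by auto
      then have "(t - x j) / (x (Suc j) - x j) \<le> 0" using xSI dj
        by (intro divide_nonpos_pos) auto
      then show ?thesis using 3 unfolding gg_def by simp
    qed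
  qed
  then show ?thesis unfolding gmap_def Let_def theI using False
    by (auto simp del: atLeastAtMost_iff)
qed

lemma dotp_GB:
  assumes xinc: "\<forall>i\<in>{1..N-1}. x i < x (Suc i)" and N2: "N \<ge> 2" and t: "t \<in> {x 1..x N}"
  shows "dotp (N-1) w (GB x N t) = Hf x N w t"
  unfolding dotp_def GB_def Hf_def gmap_eq[OF assms] by (intro sum.cong) auto

lemma dotp_GA:
  assumes xinc: "\<forall>i\<in>{1..N-1}. x i < x (Suc i)" and N2: "N \<ge> 2"
    and a: "a \<in> {x 1..x N}" and b: "b \<in> {x 1..x N}"
  shows "dotp (N-1) w (GA x N a b p) = (1 - p) * Hf x N w a + p * Hf x N w b"
proof -
  have "dotp (N-1) w (GA x N a b p) = (\<Sum>j=1..N-1. (1 - p) * (w j * gmap x N a j) + p * (w j * gmap x N b j))"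
    unfolding dotp_def GA_def by (intro sum.cong) (auto simp: algebra_simps)
  also have "\<dots> = (1 - p) * dotp (N-1) w (GB x N a) + p * dotp (N-1) w (GB x N b)"
    unfolding dotp_def GB_def by (simp add: sum.distrib sum_distrib_left)
  finally show ?thesis using dotp_GB[OF xinc N2 a] dotp_GB[OF xinc N2 b] by simp
qed

lemma Hf_x1:
  assumes xinc: "\<forall>i\<in>{1..N-1}. x i < x (Suc i)" and N2: "N \<ge> 2"
  shows "Hf x N w (x 1) = 0"
proof -
  have "x 1 \<le> x N" using x_mono[OF xinc, of 1 N] N2 by auto
  then have "dotp (N-1) w (GB x N (x 1)) = Hf x N w (x 1)" by (intro dotp_GB[OF xinc N2]) auto
  moreover have "dotp (N-1) w (GB x N (x 1)) = 0" unfolding dotp_def GB_def gmap_def by simp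
  ultimately show ?thesis by simp
qed

lemma partB:
  fixes x :: "nat \<Rightarrow> real"
  assumes xinc: "\<forall>i\<in>{1..N-1}. x i < x (Suc i)" and N2: "N \<ge> 2"
    and wv: "\<forall>j\<in>{1..N-1}. wv j \<ge> 0" and top: "Hf x N wc (x N) \<ge> D" and D: "0 \<le> D"
  shows "\<exists>M. is_max_val {r2 \<in> {x 1..x N}. dotp (N-1) wc (GB x N r2) \<le> D}
                      (\<lambda>r2. dotp (N-1) wv (GB x N r2)) M
        \<and> is_max_val {r2 \<in> {x 1..x N}. dotp (N-1) wc (GB x N r2) = D}
                      (\<lambda>r2. dotp (N-1) wv (GB x N r2)) M"
proof -
  have x1N: "x 1 \<le> x N" using x_mono[OF xinc, of 1 N] N2 by auto
  define S where "S = {r \<in> {x 1..x N}. Hf x N wc r \<le> D}"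
  have S_eq: "S = {x 1..x N} \<inter> {r. Hf x N wc r \<le> D}" unfolding S_def by auto
  have "closed {r. Hf x N wc r \<le> D}"
    by (intro closed_Collect_le Hf_cont continuous_intros)
  then have cS: "compact S" unfolding S_eq by (intro compact_Int_closed) auto
  have "x 1 \<in> S" unfolding S_def using x1N Hf_x1[OF xinc N2] D by auto
  then have neS: "S \<noteq> {}" by auto
  have "continuous_on S (Hf x N wv)" using Hf_cont[of S "\<lambda>z. z"] by (simp add: continuous_intros)
  then obtain r0 where r0: "r0 \<in> S" and r0max: "\<forall>y\<in>S. Hf x N wv y \<le> Hf x N wv r0"
    using continuous_attains_sup[OF cS neS] by blast
  have cont: "continuous_on {r0..x N} (Hf x N wc)" using Hf_cont[of _ "\<lambda>z. z"] by (simp add: continuous_intros)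
  obtain s where s: "r0 \<le> s" "s \<le> x N" "Hf x N wc s = D"
    using IVT'[of "Hf x N wc" r0 D "x N", OF _ top _ cont] r0 unfolding S_def by auto
  have sS: "s \<in> S" unfolding S_def using s r0 unfolding S_def by auto
  have "Hf x N wv r0 \<le> Hf x N wv s" by (rule Hf_mono[OF xinc wv s(1)])
  with r0max sS have sval: "Hf x N wv s = Hf x N wv r0" by (simp add: order_antisym)
  have hB: "\<And>w r. r \<in> {x 1..x N} \<Longrightarrow> dotp (N-1) w (GB x N r) = Hf x N w r"
    using dotp_GB[OF xinc N2] by blast
  have eq1: "{r2 \<in> {x 1..x N}. dotp (N-1) wc (GB x N r2) \<le> D} = S"
    unfolding S_def
  proof (rule Collect_cong)
    fix r show "(r \<in> {x 1..x N} \<and> dotp (N-1) wc (GB x N r) \<le> D) = (r \<in> {x 1..x N} \<and> Hf x N wc r \<le> D)"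
      using hB[of r wc] by auto
  qed
  have eq2: "{r2 \<in> {x 1..x N}. dotp (N-1) wc (GB x N r2) = D} = {r \<in> {x 1..x N}. Hf x N wc r = D}"
  proof (rule Collect_cong)
    fix r show "(r \<in> {x 1..x N} \<and> dotp (N-1) wc (GB x N r) = D) = (r \<in> {x 1..x N} \<and> Hf x N wc r = D)"
      using hB[of r wc] by auto
  qed
  show ?thesis
  proof (intro exI conjI)
    show "is_max_val {r2 \<in> {x 1..x N}. dotp (N-1) wc (GB x N r2) \<le> D}
                      (\<lambda>r2. dotp (N-1) wv (GB x N r2)) (Hf x N wv r0)"
      unfolding is_max_val_def eq1
    proof
      show "\<exists>s\<in>S. dotp (N-1) wv (GB x N s) = Hf x N wv r0"
        using r0 hB unfolding S_def by blast
      show "\<forall>s\<in>S. dotp (N-1) wv (GB x N s) \<le> Hf x N wv r0"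
        using r0max hB unfolding S_def by auto
    qed
    show "is_max_val {r2 \<in> {x 1..x N}. dotp (N-1) wc (GB x N r2) = D}
                      (\<lambda>r2. dotp (N-1) wv (GB x N r2)) (Hf x N wv r0)"
      unfolding is_max_val_def eq2
    proof
      show "\<exists>t\<in>{r \<in> {x 1..x N}. Hf x N wc r = D}. dotp (N-1) wv (GB x N t) = Hf x N wv r0"
        using sS s sval hB unfolding S_def by (intro bexI[of _ s]) auto
      show "\<forall>t\<in>{r \<in> {x 1..x N}. Hf x N wc r = D}. dotp (N-1) wv (GB x N t) \<le> Hf x N wv r0"
        using r0max hB unfolding S_def by auto
    qed
  qed
qed


lemma partA:
  fixes x :: "nat \<Rightarrow> real"
  assumes xinc: "\<forall>i\<in>{1..N-1}. x i < x (Suc i)" and N2: "N \<ge> 2"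
    and wv: "\<forall>j\<in>{1..N-1}. wv j \<ge> 0" and top: "Hf x N wc (x N) \<ge> D" and D: "0 \<le> D"
  shows "\<exists>M. is_max_val {(r1, r3, p) \<in> Fset x N. dotp (N-1) wc (GA x N r1 r3 p) \<le> D}
                      (\<lambda>(r1, r3, p). dotp (N-1) wv (GA x N r1 r3 p)) M
        \<and> is_max_val {(r1, r3, p) \<in> Fset x N. dotp (N-1) wc (GA x N r1 r3 p) = D}
                      (\<lambda>(r1, r3, p). dotp (N-1) wv (GA x N r1 r3 p)) M"
proof -
  have x1N: "x 1 \<le> x N" using x_mono[OF xinc, of 1 N] N2 by auto
  define Ac where "Ac = (\<lambda>z::real\<times>real\<times>real. (1 - snd (snd z)) * Hf x N wc (fst z) + snd (snd z) * Hf x N wc (fst (snd z)))"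
  define Av where "Av = (\<lambda>z::real\<times>real\<times>real. (1 - snd (snd z)) * Hf x N wv (fst z) + snd (snd z) * Hf x N wv (fst (snd z)))"
  define S where "S = {z \<in> Fset x N. Ac z \<le> D}"
  have S_eq: "S = ({x 1..x N} \<times> {x 1..x N} \<times> {0..1}) \<inter> ({z. fst z \<le> fst (snd z)} \<inter> {z. Ac z \<le> D})"
    unfolding S_def Fset_def by auto
  have "closed {z::real\<times>real\<times>real. fst z \<le> fst (snd z)}"
    by (intro closed_Collect_le continuous_intros)
  moreover have "closed {z. Ac z \<le> D}"
    unfolding Ac_def by (intro closed_Collect_le Hf_cont continuous_intros)
  ultimately have cS: "compact S" unfolding S_eq
    by (intro compact_Int_closed compact_Times closed_Int) auto
  have "(x 1, x 1, 0) \<in> S" unfolding S_def Fset_def Ac_def using x1N Hf_x1[OF xinc N2] D by auto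
  then have neS: "S \<noteq> {}" by auto
  have "continuous_on S Av" unfolding Av_def by (intro Hf_cont continuous_intros)
  then obtain z0 where z0: "z0 \<in> S" and z0max: "\<forall>y\<in>S. Av y \<le> Av z0"
    using continuous_attains_sup[OF cS neS] by blast
  obtain a b p where zabp: "z0 = (a, b, p)" by (cases z0) auto
  have abp: "a \<in> {x 1..x N}" "b \<in> {x 1..x N}" "p \<in> {0..1}" "a \<le> b" "Ac (a,b,p) \<le> D"
    using z0 unfolding zabp S_def Fset_def by auto
  define phi where "phi = (\<lambda>s. Ac (max a s, max b s, p))"
  have cont: "continuous_on {x 1..x N} phi" unfolding phi_def Ac_def
    by (intro Hf_cont continuous_intros)
  have p1: "phi (x 1) = Ac (a,b,p)" unfolding phi_def using abp by (simp add: max_absorb1)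
  have p2: "phi (x N) = Hf x N wc (x N)" unfolding phi_def Ac_def using abp
    by (simp add: max_absorb2 algebra_simps)
  obtain s where s: "x 1 \<le> s" "s \<le> x N" "phi s = D"
    using IVT'[of phi "x 1" D "x N", OF _ _ x1N cont] abp p1 p2 top by auto
  define z1 where "z1 = (max a s, max b s, p)"
  have z1F: "z1 \<in> Fset x N" unfolding z1_def Fset_def using abp s by auto
  have z1D: "Ac z1 = D" using s unfolding phi_def z1_def by simp
  then have z1S: "z1 \<in> S" unfolding S_def using z1F by auto
  have "Hf x N wv a \<le> Hf x N wv (max a s)" "Hf x N wv b \<le> Hf x N wv (max b s)"
    by (intro Hf_mono[OF xinc wv]; simp)+
  then have "Av z0 \<le> Av z1" unfolding Av_def zabp z1_def using abp
    by (auto intro!: add_mono mult_left_mono)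
  with z0max z1S have z1val: "Av z1 = Av z0" by (simp add: order_antisym)
  have hA: "\<And>w r1 r3 p. (r1, r3, p) \<in> Fset x N \<Longrightarrow>
      dotp (N-1) w (GA x N r1 r3 p) = (1 - p) * Hf x N w r1 + p * Hf x N w r3"
    using dotp_GA[OF xinc N2] unfolding Fset_def by auto
  have eq1: "{(r1, r3, p) \<in> Fset x N. dotp (N-1) wc (GA x N r1 r3 p) \<le> D} = S"
    unfolding S_def Ac_def using hA by force
  have eq2: "{(r1, r3, p) \<in> Fset x N. dotp (N-1) wc (GA x N r1 r3 p) = D} = {z \<in> Fset x N. Ac z = D}"
    unfolding Ac_def using hA by force
  have fv: "\<And>z. z \<in> Fset x N \<Longrightarrow> (\<lambda>(r1, r3, p). dotp (N-1) wv (GA x N r1 r3 p)) z = Av z"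
    unfolding Av_def using hA by force
  show ?thesis
  proof (intro exI conjI)
    show "is_max_val {(r1, r3, p) \<in> Fset x N. dotp (N-1) wc (GA x N r1 r3 p) \<le> D}
                      (\<lambda>(r1, r3, p). dotp (N-1) wv (GA x N r1 r3 p)) (Av z0)"
      unfolding is_max_val_def eq1 using z0 z0max fv zabp unfolding S_def by fastforce
    show "is_max_val {(r1, r3, p) \<in> Fset x N. dotp (N-1) wc (GA x N r1 r3 p) = D}
                      (\<lambda>(r1, r3, p). dotp (N-1) wv (GA x N r1 r3 p)) (Av z0)"
      unfolding is_max_val_def eq2
    proof
      show "\<exists>t\<in>{z \<in> Fset x N. Ac z = D}. (\<lambda>(r1, r3, p). dotp (N-1) wv (GA x N r1 r3 p)) t = Av z0"
        using z1F z1D z1val fv by (intro bexI[of _ z1]) auto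
      show "\<forall>t\<in>{z \<in> Fset x N. Ac z = D}. (\<lambda>(r1, r3, p). dotp (N-1) wv (GA x N r1 r3 p)) t \<le> Av z0"
        using z0max fv unfolding S_def by auto
    qed
  qed
qed


lemma Hf_xN:
  fixes x :: "nat \<Rightarrow> real"
  assumes xinc: "\<forall>i\<in>{1..N-1}. x i < x (Suc i)"
  shows "Hf x N w (x N) = (\<Sum>j=1..N-1. w j)"
  unfolding Hf_def
proof (intro sum.cong refl)
  fix j assume j: "j \<in> {1..N-1}"
  have "x (Suc j) \<le> x N" using x_mono[OF xinc, of "Suc j" N] j by auto
  moreover have "x j < x (Suc j)" using xinc j by auto
  ultimately have "1 \<le> (x N - x j) / (x (Suc j) - x j)" by (simp add: field_simps)
  then show "w j * gg x j (x N) = w j" unfolding gg_def by simp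
qed

lemma Rvec_sum:
  assumes "N \<ge> 3"
  shows "(\<Sum>j=1..N-1. Rvec N v j) = 1"
proof -
  have e: "N - 1 = Suc (N - 2)" using assms by auto
  have "(\<Sum>j=1..N-1. Rvec N v j) = (\<Sum>j=1..N-2. Rvec N v j) + Rvec N v (N-1)"
    unfolding e using assms by (simp add: sum.cl_ivl_Suc)
  also have "(\<Sum>j=1..N-2. Rvec N v j) = (\<Sum>j=1..N-2. v j)"
    unfolding Rvec_def by (intro sum.cong) auto
  also have "Rvec N v (N-1) = 1 - (\<Sum>j=1..N-2. v j)"
    unfolding Rvec_def using assms by auto
  finally show ?thesis by simp
qed

lemma Rvec_nonneg:
  assumes "v \<in> Vset x N m r1s r3s ps r2s l" "N \<ge> 3"
  shows "\<forall>j\<in>{1..N-1}. Rvec N v j \<ge> 0"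
  using assms unfolding Vset_def Rvec_def by auto

theorem proposition5:
  fixes x :: "nat \<Rightarrow> real" and N m :: nat
    and r1s r2s r3s ps l :: "nat \<Rightarrow> real"
    and c u v1 v2 :: "nat \<Rightarrow> real" and D :: real
  assumes N3: "N \<ge> 3" and m1: "m \<ge> 1"
    and xinc: "\<forall>i\<in>{1..N-1}. x i < x (Suc i)"
    and dataF: "\<forall>k\<in>{1..m-1}. (r1s k, r3s k, ps k) \<in> Fset x N"
    and dataB: "\<forall>k\<in>{1..m-1}. r2s k \<in> {x 1..x N}"
    and labels: "\<forall>k\<in>{1..m-1}. l k \<in> {-1, 1}"
    and nonempty_int: "interior_n (N-2) (Vset x N m r1s r3s ps r2s l) \<noteq> {}"
    and center: "analytic_center N m (dvec x N r1s r3s ps r2s) l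
                   (Vset x N m r1s r3s ps r2s l) c"
    and axis: "longest_axis (N-2) (Hmat N m (dvec x N r1s r3s ps r2s) l c) u"
    and v1: "v1 \<in> Vset x N m r1s r3s ps r2s l - interior_n (N-2) (Vset x N m r1s r3s ps r2s l)"
    and v1_line: "\<exists>t. v1 = (\<lambda>j. c j + t * u j)"
    and v2: "v2 \<in> Vset x N m r1s r3s ps r2s l - interior_n (N-2) (Vset x N m r1s r3s ps r2s l)"
    and v2_line: "\<exists>t. v2 = (\<lambda>j. c j + t * u j)"
    and v12: "v1 \<noteq> v2"
    and D: "0 < D" "D \<le> 1"
  shows
    "(\<exists>M. is_max_val {r2 \<in> {x 1..x N}. dotp (N-1) (Rvec N c) (GB x N r2) \<le> D}
                      (\<lambda>r2. dotp (N-1) (Rvec N v1) (GB x N r2)) M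
        \<and> is_max_val {r2 \<in> {x 1..x N}. dotp (N-1) (Rvec N c) (GB x N r2) = D}
                      (\<lambda>r2. dotp (N-1) (Rvec N v1) (GB x N r2)) M)
   \<and> (\<exists>M. is_max_val {(r1, r3, p) \<in> Fset x N. dotp (N-1) (Rvec N c) (GA x N r1 r3 p) \<le> D}
                      (\<lambda>(r1, r3, p). dotp (N-1) (Rvec N v2) (GA x N r1 r3 p)) M
        \<and> is_max_val {(r1, r3, p) \<in> Fset x N. dotp (N-1) (Rvec N c) (GA x N r1 r3 p) = D}
                      (\<lambda>(r1, r3, p). dotp (N-1) (Rvec N v2) (GA x N r1 r3 p)) M)"
proof -
  have N2: "N \<ge> 2" using N3 by simp
  have top: "Hf x N (Rvec N c) (x N) \<ge> D"
    using Hf_xN[OF xinc] Rvec_sum[OF N3] D by simp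
  have w1: "\<forall>j\<in>{1..N-1}. Rvec N v1 j \<ge> 0" using Rvec_nonneg[OF _ N3] v1 by blast
  have w2: "\<forall>j\<in>{1..N-1}. Rvec N v2 j \<ge> 0" using Rvec_nonneg[OF _ N3] v2 by blast
  show ?thesis
    using partB[OF xinc N2 w1 top] partA[OF xinc N2 w2 top] D by auto
qed

end
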